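(* Let $a_1,\dots,a_n$ be positive integers and $B,k$ integers with $\sum_{i=1}^n a_i=Bk$. Let $G$ be the complete bipartite graph $K_{k,n}$ with parts $\{v_1,\dots,v_k\}$ and $\{w_1,\dots,w_n\}$, where every edge incident to $w_i$ has weight $a_i$, and put target outdegrees $d_{w_i}=a_i$ and $d_{v_j}=Bk-B$. Then $\{a_1,\dots,a_n\}$ (as a multiset) can be partitioned into $k$ parts each with sum exactly $B$ if and only if $G$ has an orientation in which every vertex $u$ has total weight of outgoing edges exactly $d_u$.
   Context: An orientation of an undirected graph chooses a direction for each edge; the out-weight of a vertex is the sum of weights of the edges directed out of it. *)

theory Defs
  imports Main
begin

text \<open>General weighted undirected graphs: an edge is a 2-element vertex set,
  an orientation chooses for each edge its tail (the endpoint it is directed out of).\<close>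

definition is_orientation :: "'a set set \<Rightarrow> ('a set \<Rightarrow> 'a) \<Rightarrow> bool" where
  "is_orientation E h \<longleftrightarrow> (\<forall>e\<in>E. h e \<in> e)"

definition out_weight :: "'a set set \<Rightarrow> ('a set \<Rightarrow> int) \<Rightarrow> ('a set \<Rightarrow> 'a) \<Rightarrow> 'a \<Rightarrow> int" where
  "out_weight E wt h u = (\<Sum>e\<in>{e\<in>E. h e = u}. wt e)"

datatype vtx = V nat | W nat

definition Kkn_vertices :: "nat \<Rightarrow> nat \<Rightarrow> vtx set" where
  "Kkn_vertices k n = {V j | j. j < k} \<union> {W i | i. i < n}"

definition Kkn_edges :: "nat \<Rightarrow> nat \<Rightarrow> vtx set set" where
  "Kkn_edges k n = {{V j, W i} | j i. j < k \<and> i < n}"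

definition Kkn_weight :: "(nat \<Rightarrow> int) \<Rightarrow> vtx set \<Rightarrow> int" where
  "Kkn_weight a e = a (THE i. W i \<in> e)"

definition Kkn_target :: "(nat \<Rightarrow> int) \<Rightarrow> int \<Rightarrow> nat \<Rightarrow> vtx \<Rightarrow> int" where
  "Kkn_target a B k u = (case u of W i \<Rightarrow> a i | V j \<Rightarrow> B * int k - B)"

end

theory Submission
  imports Defs
begin

lemma inj_edge: "{V j, W i} = {V j', W i'} \<longleftrightarrow> j = j' \<and> i = i'"
  by (auto simp: doubleton_eq_iff)

lemma wt_edge: "Kkn_weight a {V j, W i} = a i"
  unfolding Kkn_weight_def by (rule arg_cong[where f=a]) (rule the_equality, auto)

lemma ow:
  "out_weight (Kkn_edges k n) (Kkn_weight a) h u =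
     (\<Sum>(j,i)\<in>{(j,i). j<k \<and> i<n \<and> h {V j, W i} = u}. a i)"
proof -
  let ?S = "{(j,i). j<k \<and> i<n \<and> h {V j, W i} = u}"
  let ?f = "\<lambda>(j,i). {V j, W i}"
  have img: "{e\<in>Kkn_edges k n. h e = u} = ?f ` ?S"
    unfolding Kkn_edges_def by auto
  have inj: "inj_on ?f ?S"
    by (auto simp: inj_on_def inj_edge)
  show ?thesis
    unfolding out_weight_def img sum.reindex[OF inj]
    by (rule sum.cong) (auto simp: wt_edge)
qed

lemma owW:
  assumes o: "is_orientation (Kkn_edges k n) h" and i0: "i0 < n"
  shows "out_weight (Kkn_edges k n) (Kkn_weight a) h (W i0) =
     of_nat (card {j. j<k \<and> h {V j, W i0} = W i0}) * a i0"
proof -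
  have eq: "{(j,i). j<k \<and> i<n \<and> h {V j, W i} = W i0} = (\<lambda>j. (j,i0)) ` {j. j<k \<and> h {V j, W i0} = W i0}"
  proof (auto simp: i0)
    fix j i assume "j<k" "i<n" "h {V j, W i} = W i0"
    moreover have "h {V j, W i} \<in> {V j, W i}" using o \<open>j<k\<close> \<open>i<n\<close>
      unfolding is_orientation_def Kkn_edges_def by blast
    ultimately show "(j, i) \<in> (\<lambda>j. (j, i0)) ` {j. j < k \<and> h {V j, W i0} = W i0}" by auto
  qed
  have inj: "inj_on (\<lambda>j. (j,i0)) A" for A by (auto simp: inj_on_def)
  show ?thesis unfolding ow eq sum.reindex[OF inj] by simp
qed

lemma owV:
  assumes o: "is_orientation (Kkn_edges k n) h" and j0: "j0 < k"
  shows "out_weight (Kkn_edges k n) (Kkn_weight a) h (V j0) =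
     (\<Sum>i\<in>{i. i<n \<and> h {V j0, W i} = V j0}. a i)"
proof -
  have eq: "{(j,i). j<k \<and> i<n \<and> h {V j, W i} = V j0} = (\<lambda>i. (j0,i)) ` {i. i<n \<and> h {V j0, W i} = V j0}"
  proof (auto simp: j0)
    fix j i assume "j<k" "i<n" "h {V j, W i} = V j0"
    moreover have "h {V j, W i} \<in> {V j, W i}" using o \<open>j<k\<close> \<open>i<n\<close>
      unfolding is_orientation_def Kkn_edges_def by blast
    ultimately show "(j, i) \<in> (\<lambda>i. (j0, i)) ` {i. i < n \<and> h {V j0, W i} = V j0}" by auto
  qed
  have inj: "inj_on (\<lambda>i. (j0,i)) A" for A by (auto simp: inj_on_def)
  show ?thesis unfolding ow eq sum.reindex[OF inj] by simp
qed

lemma split_sum: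
  fixes a :: "nat \<Rightarrow> int"
  shows "(\<Sum>i<n. a i) = (\<Sum>i\<in>{i. i<n \<and> P i}. a i) + (\<Sum>i\<in>{i. i<n \<and> \<not> P i}. a i)"
proof -
  have "{..<n} = {i. i<n \<and> P i} \<union> {i. i<n \<and> \<not> P i}" by auto
  moreover have "(\<Sum>i\<in>{i. i<n \<and> P i} \<union> {i. i<n \<and> \<not> P i}. a i) = (\<Sum>i\<in>{i. i<n \<and> P i}. a i) + (\<Sum>i\<in>{i. i<n \<and> \<not> P i}. a i)"
    by (rule sum.union_disjoint) auto
  ultimately show ?thesis by simp
qed

lemma theW: "(THE i'. W i' \<in> {V j, W i}) = i"
  by (rule the_equality) auto

lemma theV: "(THE j'. V j' \<in> {V j, W i}) = j"
  by (rule the_equality) auto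

theorem lemma6p4:
  fixes a :: "nat \<Rightarrow> int" and n k :: nat and B :: int
  assumes pos: "\<forall>i<n. a i > 0"
    and sum: "(\<Sum>i<n. a i) = B * int k"
  shows "(\<exists>p :: nat \<Rightarrow> nat. (\<forall>i<n. p i < k) \<and>
            (\<forall>j<k. (\<Sum>i\<in>{i. i < n \<and> p i = j}. a i) = B))
     \<longleftrightarrow> (\<exists>h. is_orientation (Kkn_edges k n) h \<and>
            (\<forall>u\<in>Kkn_vertices k n.
               out_weight (Kkn_edges k n) (Kkn_weight a) h u = Kkn_target a B k u))"
proof
  assume "\<exists>p :: nat \<Rightarrow> nat. (\<forall>i<n. p i < k) \<and> (\<forall>j<k. (\<Sum>i\<in>{i. i < n \<and> p i = j}. a i) = B)"
  then obtain p :: "nat \<Rightarrow> nat" where pk: "\<forall>i<n. p i < k"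
    and ps: "\<forall>j<k. (\<Sum>i\<in>{i. i < n \<and> p i = j}. a i) = B" by blast
  define h where "h e = (let i = THE i. W i \<in> e; j = THE j. V j \<in> e in if p i = j then W i else V j)" for e
  have hE: "h {V j, W i} = (if p i = j then W i else V j)" for i j
    unfolding h_def theW theV by simp
  have ori: "is_orientation (Kkn_edges k n) h"
    unfolding is_orientation_def Kkn_edges_def by (auto simp: hE split: if_splits)
  show "\<exists>h. is_orientation (Kkn_edges k n) h \<and>
            (\<forall>u\<in>Kkn_vertices k n.
               out_weight (Kkn_edges k n) (Kkn_weight a) h u = Kkn_target a B k u)"
  proof (intro exI conjI ballI)
    show "is_orientation (Kkn_edges k n) h" by (rule ori)
    fix u assume "u \<in> Kkn_vertices k n"
    then consider (v) j where "u = V j" "j < k" | (w) i where "u = W i" "i < n"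
      unfolding Kkn_vertices_def by blast
    then show "out_weight (Kkn_edges k n) (Kkn_weight a) h u = Kkn_target a B k u"
    proof cases
      case (v j)
      have "{i. i<n \<and> h {V j, W i} = V j} = {i. i<n \<and> \<not> p i = j}" by (auto simp: hE)
      moreover have "(\<Sum>i<n. a i) = (\<Sum>i\<in>{i. i<n \<and> p i = j}. a i) + (\<Sum>i\<in>{i. i<n \<and> \<not> p i = j}. a i)"
        by (rule split_sum)
      ultimately show ?thesis using v ps sum owV[OF ori v(2)] by (simp add: Kkn_target_def)
    next
      case (w i)
      have "{j. j<k \<and> h {V j, W i} = W i} = {p i}" using pk w by (auto simp: hE)
      then show ?thesis using w owW[OF ori w(2)] by (simp add: Kkn_target_def)
    qed
  qed
next
  assume "\<exists>h. is_orientation (Kkn_edges k n) h \<and>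
            (\<forall>u\<in>Kkn_vertices k n.
               out_weight (Kkn_edges k n) (Kkn_weight a) h u = Kkn_target a B k u)"
  then obtain h where ori: "is_orientation (Kkn_edges k n) h"
    and tg: "\<forall>u\<in>Kkn_vertices k n. out_weight (Kkn_edges k n) (Kkn_weight a) h u = Kkn_target a B k u"
    by blast
  have hin: "h {V j, W i} \<in> {V j, W i}" if "j<k" "i<n" for i j
    using ori that unfolding is_orientation_def Kkn_edges_def by blast
  have card1: "card {j. j<k \<and> h {V j, W i} = W i} = 1" if "i<n" for i
  proof -
    have "W i \<in> Kkn_vertices k n" using that unfolding Kkn_vertices_def by blast
    then have "of_nat (card {j. j<k \<and> h {V j, W i} = W i}) * a i = a i"
      using bspec[OF tg \<open>W i \<in> Kkn_vertices k n\<close>] owW[OF ori that, of a] by (simp add: Kkn_target_def)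
    then show ?thesis using pos that by force
  qed
  define p where "p i = (THE j. j<k \<and> h {V j, W i} = W i)" for i
  have pp: "p i < k \<and> h {V (p i), W i} = W i \<and> (\<forall>j. j<k \<and> h {V j, W i} = W i \<longrightarrow> j = p i)" if hi: "i<n" for i
  proof -
    obtain j0 where "{j. j<k \<and> h {V j, W i} = W i} = {j0}" by (rule card_1_singletonE[OF card1[OF hi]])
    then have ex: "\<exists>!j. j<k \<and> h {V j, W i} = W i" by (auto simp: set_eq_iff)
    show ?thesis unfolding p_def using theI'[OF ex] the1_equality[OF ex] by blast
  qed
  show "\<exists>p :: nat \<Rightarrow> nat. (\<forall>i<n. p i < k) \<and> (\<forall>j<k. (\<Sum>i\<in>{i. i < n \<and> p i = j}. a i) = B)"
  proof (intro exI conjI allI impI)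
    fix i assume "i<n" then show "p i < k" using pp by blast
  next
    fix j assume j: "j<k"
    have "V j \<in> Kkn_vertices k n" using j unfolding Kkn_vertices_def by blast
    then have s1: "(\<Sum>i\<in>{i. i<n \<and> h {V j, W i} = V j}. a i) = B * int k - B"
      using bspec[OF tg \<open>V j \<in> Kkn_vertices k n\<close>] owV[OF ori j, of a] by (simp add: Kkn_target_def)
    have "{i. i<n \<and> h {V j, W i} = V j} = {i. i<n \<and> \<not> p i = j}"
    proof (rule set_eqI, rule iffI)
      fix i assume "i \<in> {i. i<n \<and> h {V j, W i} = V j}"
      then show "i \<in> {i. i<n \<and> \<not> p i = j}" using pp by fastforce
    next
      fix i assume i: "i \<in> {i. i<n \<and> \<not> p i = j}"
      then have "h {V j, W i} \<noteq> W i" using pp j by blast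
      then show "i \<in> {i. i<n \<and> h {V j, W i} = V j}" using hin[OF j] i by auto
    qed
    moreover have "(\<Sum>i<n. a i) = (\<Sum>i\<in>{i. i<n \<and> p i = j}. a i) + (\<Sum>i\<in>{i. i<n \<and> \<not> p i = j}. a i)"
      by (rule split_sum)
    ultimately show "(\<Sum>i\<in>{i. i < n \<and> p i = j}. a i) = B" using s1 sum by simp
  qed
qed

end
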